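(* Let $(X,d)$ be a complete metric space, $k\ge2$, $0<\rho<1$, and $\mu:X^k\to X$ a nonexpansive, coordinatewise $\rho$-contractive $k$-mean. Then the barycentric operator $\beta$ of $\mu$ is power convergent, and hence there exists a unique continuous $(k+1)$-mean $\tilde\mu:X^{k+1}\to X$ that $\beta$-extends $\mu$. Furthermore, $\tilde\mu$ is nonexpansive and coordinatewise $\rho$-contractive.
   Context: A $k$-mean is a map $\mu:X^k\to X$ with $\mu(x,\ldots,x)=x$. Nonexpansive: $d(\mu(\mathbf{x}),\mu(\mathbf{y}))\le\max_j d(x_j,y_j)$ for all $\mathbf{x},\mathbf{y}\in X^k$. Coordinatewise $\rho$-contractive: $d(\mu(\mathbf{x}),\mu(\mathbf{y}))\le\rho\,d(x_j,y_j)$ whenever $\mathbf{x},\mathbf{y}$ differ only in coordinate $j$. Barycentric operator: $\beta(\mathbf{x})_j=\mu(x_1,\ldots,x_{j-1},x_{j+1},\ldots,x_{k+1})$ on $X^{k+1}$; power convergent: for each $\mathbf{x}$, $\beta^n(\mathbf{x})\to(x^*,\ldots,x^* )$ for some $x^*$. A $(k+1)$-mean $\nu$ $\beta$-extends $\mu$ if $\beta^n(\mathbf{x})\to(\nu(\mathbf{x}),\ldots,\nu(\mathbf{x}))$ for every $\mathbf{x}$. *)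

theory Defs
  imports "HOL-Analysis.Analysis"
begin

text \<open>Points of X^k are represented as lists of length k.
  A map X^k -> X is a function on lists; only its values on lists of length k matter.\<close>

definition is_mean :: "nat \<Rightarrow> ('a list \<Rightarrow> 'a) \<Rightarrow> bool" where
  "is_mean k \<mu> \<longleftrightarrow> (\<forall>x. \<mu> (replicate k x) = x)"

definition nonexpansive_mean :: "nat \<Rightarrow> ('a::metric_space list \<Rightarrow> 'a) \<Rightarrow> bool" where
  "nonexpansive_mean k \<mu> \<longleftrightarrow>
     (\<forall>xs ys. length xs = k \<longrightarrow> length ys = k \<longrightarrow>
        dist (\<mu> xs) (\<mu> ys) \<le> Max {dist (xs ! j) (ys ! j) | j. j < k})"

definition coord_contractive :: "nat \<Rightarrow> real \<Rightarrow> ('a::metric_space list \<Rightarrow> 'a) \<Rightarrow> bool" where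
  "coord_contractive k \<rho> \<mu> \<longleftrightarrow>
     (\<forall>xs ys j. length xs = k \<longrightarrow> length ys = k \<longrightarrow> j < k \<longrightarrow>
        (\<forall>i<k. i \<noteq> j \<longrightarrow> xs ! i = ys ! i) \<longrightarrow>
        dist (\<mu> xs) (\<mu> ys) \<le> \<rho> * dist (xs ! j) (ys ! j))"

definition barycentric :: "nat \<Rightarrow> ('a list \<Rightarrow> 'a) \<Rightarrow> 'a list \<Rightarrow> 'a list" where
  "barycentric k \<mu> xs = map (\<lambda>j. \<mu> (take j xs @ drop (Suc j) xs)) [0..<Suc k]"

definition power_convergent :: "nat \<Rightarrow> ('a::metric_space list \<Rightarrow> 'a) \<Rightarrow> bool" where
  "power_convergent k \<mu> \<longleftrightarrow>
     (\<forall>xs. length xs = Suc k \<longrightarrow>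
        (\<exists>x. \<forall>j<Suc k. (\<lambda>n. ((barycentric k \<mu> ^^ n) xs) ! j) \<longlonglongrightarrow> x))"

definition beta_extends :: "nat \<Rightarrow> ('a::metric_space list \<Rightarrow> 'a) \<Rightarrow> ('a list \<Rightarrow> 'a) \<Rightarrow> bool" where
  "beta_extends k \<mu> \<nu> \<longleftrightarrow>
     (\<forall>xs. length xs = Suc k \<longrightarrow>
        (\<forall>j<Suc k. (\<lambda>n. ((barycentric k \<mu> ^^ n) xs) ! j) \<longlonglongrightarrow> \<nu> xs))"

definition continuous_mean :: "nat \<Rightarrow> ('a::metric_space list \<Rightarrow> 'a) \<Rightarrow> bool" where
  "continuous_mean k \<nu> \<longleftrightarrow>
     (\<forall>xs. length xs = k \<longrightarrow> (\<forall>e>0. \<exists>d>0. \<forall>ys. length ys = k \<longrightarrow>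
        (\<forall>j<k. dist (xs ! j) (ys ! j) < d) \<longrightarrow> dist (\<nu> xs) (\<nu> ys) < e))"

end

theory Submission
  imports Defs
begin

lemma geom_cauchy:
  fixes z :: "nat \<Rightarrow> 'a::metric_space"
  assumes c: "0 \<le> c" "c < 1" and d: "\<And>n. dist (z n) (z (Suc n)) \<le> C * c^n"
  shows "Cauchy z"
proof -
  have C0: "0 \<le> C" proof - have "dist (z 0) (z (Suc 0)) \<le> C" using d[of 0] by simp then show ?thesis using zero_le_dist[of "z 0" "z (Suc 0)"] by linarith qed
  have s1: "dist (z m) (z (m+n)) \<le> (\<Sum>i<n. C * c^(m+i))" for m n
  proof (induction n)
    case 0 then show ?case by simp
  next
    case (Suc n)
    have "dist (z m) (z (m + Suc n)) \<le> dist (z m) (z (m+n)) + dist (z (m+n)) (z (Suc (m+n)))"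
      by (simp add: dist_triangle)
    also have "\<dots> \<le> (\<Sum>i<n. C * c^(m+i)) + C * c^(m+n)"
      using Suc d[of "m+n"] by linarith
    finally show ?case by simp
  qed
  have s2: "(\<Sum>i<n. C * c^(m+i)) \<le> C * c^m / (1-c)" for m n
  proof -
    have "(\<Sum>i<n. C * c^(m+i)) = C * c^m * (\<Sum>i<n. c^i)"
      by (simp add: sum_distrib_left power_add mult.assoc)
    also have "(\<Sum>i<n. c^i) = (1 - c^n) / (1-c)" using c sum_gp_strict[of c n] by simp
    also have "C * c^m * ((1 - c^n) / (1-c)) \<le> C * c^m * (1 / (1-c))"
      apply (rule mult_left_mono)
      using c C0 by (auto simp: divide_right_mono zero_le_power)
    finally show ?thesis by simp
  qed
  have lim: "(\<lambda>m. C * c^m / (1-c)) \<longlonglongrightarrow> 0"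
    using c by (intro tendsto_eq_intros LIMSEQ_power_zero) auto
  show ?thesis
  proof (rule metric_CauchyI)
    fix e :: real assume "0 < e"
    then have "e/2 > 0" by simp
    from order_tendstoD(2)[OF lim this] obtain M where M: "\<And>m. m \<ge> M \<Longrightarrow> C * c^m / (1-c) < e/2"
      unfolding eventually_sequentially by auto
    have "dist (z M) (z m) < e/2" if "m \<ge> M" for m
    proof -
      have "dist (z M) (z m) \<le> C * c^M / (1-c)"
        using s1[of M "m-M"] s2[of M "m-M"] that by simp
      then show ?thesis using M[of M] by linarith
    qed
    note h = this
    have "\<forall>m\<ge>M. \<forall>n\<ge>M. dist (z m) (z n) < e"
    proof (intro allI impI)
      fix m n assume "m \<ge> M" "n \<ge> M"
      have "dist (z m) (z n) \<le> dist (z M) (z m) + dist (z M) (z n)" by (rule dist_triangle3)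
      then show "dist (z m) (z n) < e" using h[OF \<open>m \<ge> M\<close>] h[OF \<open>n \<ge> M\<close>] by linarith
    qed
    then show "\<exists>M. \<forall>m\<ge>M. \<forall>n\<ge>M. dist (z m) (z n) < e" by blast
  qed
qed

lemma Max_le_bound:
  fixes f :: "nat \<Rightarrow> real"
  assumes "0 < k" "\<And>j. j<k \<Longrightarrow> f j \<le> B" shows "Max {f j |j. j<k} \<le> B"
proof -
  have e: "{f j |j. j<k} = f ` {..<k}" by auto
  show ?thesis unfolding e using assms by (subst Max_le_iff) auto
qed

lemma Max_less_bound:
  fixes f :: "nat \<Rightarrow> real"
  assumes "0 < k" "\<And>j. j<k \<Longrightarrow> f j < B" shows "Max {f j |j. j<k} < B"
proof -
  have e: "{f j |j. j<k} = f ` {..<k}" by auto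
  show ?thesis unfolding e using assms by (subst Max_less_iff) auto
qed

lemma le_Max_bound:
  fixes f :: "nat \<Rightarrow> real"
  assumes "j < k" shows "f j \<le> Max {f j |j. j<k}"
proof -
  have e: "{f j |j. j<k} = f ` {..<k}" by auto
  show ?thesis unfolding e using assms by (intro Max_ge) auto
qed

lemma del_nth:
  assumes "length xs = Suc k" "i < Suc k" "p < k"
  shows "(take i xs @ drop (Suc i) xs) ! p = (if p < i then xs ! p else xs ! Suc p)"
  using assms by (auto simp: nth_append min_def)

lemma del_length:
  assumes "length xs = Suc k" "i < Suc k"
  shows "length (take i xs @ drop (Suc i) xs) = k"
  using assms by auto

lemma bary_length: "length (barycentric k \<mu> xs) = Suc k"
  by (simp add: barycentric_def)

lemma bary_nth: "i < Suc k \<Longrightarrow> barycentric k \<mu> xs ! i = \<mu> (take i xs @ drop (Suc i) xs)"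
  by (simp add: barycentric_def del: upt_Suc)

lemma bary_pow_length: "length xs = Suc k \<Longrightarrow> length ((barycentric k \<mu> ^^ n) xs) = Suc k"
  by (induction n) (auto simp: bary_length)

locale bary =
  fixes \<mu> :: "'a::complete_space list \<Rightarrow> 'a" and k :: nat and \<rho> :: real
  assumes k2: "k \<ge> 2" and rho0: "0 < \<rho>" and rho1: "\<rho> < 1"
    and mean: "is_mean k \<mu>" and ne: "nonexpansive_mean k \<mu>" and cc: "coord_contractive k \<rho> \<mu>"
begin

abbreviation "B \<equiv> barycentric k \<mu>"

definition L where "L xs = (\<Sum>i<k. dist (xs!i) (xs!Suc i))"

definition Md where "Md xs ys = Max {dist (xs!j) (ys!j) |j. j < Suc k}"

lemma consec:
  assumes "length xs = Suc k" "i < k"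
  shows "dist (B xs ! i) (B xs ! Suc i) \<le> \<rho> * dist (xs!i) (xs!Suc i)"
proof -
  let ?a = "take i xs @ drop (Suc i) xs" and ?b = "take (Suc i) xs @ drop (Suc (Suc i)) xs"
  have la: "length ?a = k" and lb: "length ?b = k" using assms by auto
  have eq: "\<forall>p<k. p \<noteq> i \<longrightarrow> ?a ! p = ?b ! p"
    using assms by (auto simp: del_nth[OF assms(1)])
  have "dist (\<mu> ?a) (\<mu> ?b) \<le> \<rho> * dist (?a!i) (?b!i)"
    using cc la lb eq assms(2) unfolding coord_contractive_def by blast
  moreover have "?a!i = xs!Suc i" "?b!i = xs!i"
    using assms by (auto simp: del_nth[OF assms(1)])
  ultimately show ?thesis using assms by (simp add: bary_nth dist_commute)
qed

lemma L_step:
  assumes "length xs = Suc k"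
  shows "L (B xs) \<le> \<rho> * L xs"
  unfolding L_def sum_distrib_left
  by (rule sum_mono) (use consec[OF assms] in auto)

lemma L_pow:
  assumes "length xs = Suc k"
  shows "L ((B^^n) xs) \<le> \<rho>^n * L xs"
proof (induction n)
  case 0 then show ?case by simp
next
  case (Suc n)
  have "L ((B^^Suc n) xs) \<le> \<rho> * L ((B^^n) xs)"
    using L_step[OF bary_pow_length[OF assms]] by simp
  also have "\<dots> \<le> \<rho> * (\<rho>^n * L xs)" using Suc rho0 by simp
  finally show ?case by simp
qed

lemma path:
  assumes "i \<le> j"
  shows "dist (xs!i) (xs!j) \<le> (\<Sum>p\<in>{i..<j}. dist (xs!p) (xs!Suc p))"
  using assms
proof (induction j rule: dec_induct)
  case base then show ?case by simp
next
  case (step j)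
  have "dist (xs!i) (xs!Suc j) \<le> dist (xs!i) (xs!j) + dist (xs!j) (xs!Suc j)"
    by (rule dist_triangle)
  then show ?case using step by (simp add: sum.atLeastLessThan_Suc)
qed

lemma diam:
  assumes "i \<le> k" "j \<le> k"
  shows "dist (xs!i) (xs!j) \<le> L xs"
proof -
  have *: "dist (xs!a) (xs!b) \<le> L xs" if "a \<le> b" "b \<le> k" for a b
  proof -
    have "dist (xs!a) (xs!b) \<le> (\<Sum>p\<in>{a..<b}. dist (xs!p) (xs!Suc p))" using path that by blast
    also have "\<dots> \<le> L xs" unfolding L_def
      by (rule sum_mono2) (use that in auto)
    finally show ?thesis .
  qed
  show ?thesis
  proof (cases "i \<le> j")
    case True then show ?thesis using * assms by blast
  next
    case False then show ?thesis using *[of j i] assms by (simp add: dist_commute)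
  qed
qed

lemma step_close:
  assumes "length xs = Suc k" "i < Suc k"
  shows "dist (B xs ! i) (xs ! i) \<le> L xs"
proof -
  let ?a = "take i xs @ drop (Suc i) xs" and ?r = "replicate k (xs!i)"
  have "dist (\<mu> ?a) (\<mu> ?r) \<le> Max {dist (?a ! j) (?r ! j) |j. j < k}"
    using ne assms unfolding nonexpansive_mean_def by auto
  also have "\<dots> \<le> L xs"
  proof (rule Max_le_bound)
    show "0 < k" using k2 by simp
    fix j assume "j < k"
    then show "dist (?a ! j) (?r ! j) \<le> L xs"
      using assms by (auto simp: del_nth[OF assms] intro!: diam)
  qed
  finally show ?thesis using mean assms unfolding is_mean_def by (simp add: bary_nth)
qed

lemma seq_step:
  assumes "length xs = Suc k" "i < Suc k"
  shows "dist ((B^^n) xs ! i) ((B^^Suc n) xs ! i) \<le> L xs * \<rho>^n"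
proof -
  have "dist ((B^^Suc n) xs ! i) ((B^^n) xs ! i) \<le> L ((B^^n) xs)"
    using step_close[OF bary_pow_length[OF assms(1)] assms(2)] by simp
  also have "\<dots> \<le> L xs * \<rho>^n" using L_pow[OF assms(1)] by (simp add: mult.commute)
  finally show ?thesis by (simp add: dist_commute)
qed

lemma conv:
  assumes "length xs = Suc k" "i < Suc k"
  shows "\<exists>l. (\<lambda>n. (B^^n) xs ! i) \<longlonglongrightarrow> l"
proof -
  have "Cauchy (\<lambda>n. (B^^n) xs ! i)"
    by (rule geom_cauchy[where c = \<rho> and C = "L xs"]) (use rho0 rho1 seq_step[OF assms] in auto)
  then show ?thesis using Cauchy_convergent_iff convergent_def by blast
qed

lemma diam_to0:
  assumes "length xs = Suc k" "i < Suc k"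
  shows "(\<lambda>n. dist ((B^^n) xs ! i) ((B^^n) xs ! 0)) \<longlonglongrightarrow> 0"
proof (rule tendsto_sandwich[where f = "\<lambda>n. 0" and h = "\<lambda>n. \<rho>^n * L xs"])
  show "\<forall>\<^sub>F n in sequentially. 0 \<le> dist ((B^^n) xs ! i) ((B^^n) xs ! 0)" by simp
  show "\<forall>\<^sub>F n in sequentially. dist ((B^^n) xs ! i) ((B^^n) xs ! 0) \<le> \<rho>^n * L xs"
  proof (rule always_eventually, rule allI)
    fix n
    have "dist ((B^^n) xs ! i) ((B^^n) xs ! 0) \<le> L ((B^^n) xs)" using diam[of i 0] assms by simp
    then show "dist ((B^^n) xs ! i) ((B^^n) xs ! 0) \<le> \<rho>^n * L xs" using L_pow[OF assms(1), of n] by linarith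
  qed
  show "(\<lambda>n. 0::real) \<longlonglongrightarrow> 0" by simp
  show "(\<lambda>n. \<rho>^n * L xs) \<longlonglongrightarrow> 0"
    using rho0 rho1 by (intro tendsto_mult_left_zero LIMSEQ_power_zero) auto
qed

definition nu where "nu xs = lim (\<lambda>n. (B^^n) xs ! 0)"

lemma nu_lim:
  assumes "length xs = Suc k" "i < Suc k"
  shows "(\<lambda>n. (B^^n) xs ! i) \<longlonglongrightarrow> nu xs"
proof -
  obtain l0 where l0: "(\<lambda>n. (B^^n) xs ! 0) \<longlonglongrightarrow> l0" using conv[OF assms(1)] by blast
  then have nu: "nu xs = l0" unfolding nu_def by (rule limI)
  obtain li where li: "(\<lambda>n. (B^^n) xs ! i) \<longlonglongrightarrow> li" using conv[OF assms] by blast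
  have "(\<lambda>n. dist ((B^^n) xs ! i) ((B^^n) xs ! 0)) \<longlonglongrightarrow> dist li l0"
    using li l0 by (rule tendsto_dist)
  then have "dist li l0 = 0" using diam_to0[OF assms] LIMSEQ_unique by blast
  then show ?thesis using li nu by simp
qed

lemma Md_ge: "i < Suc k \<Longrightarrow> dist (xs!i) (ys!i) \<le> Md xs ys"
  unfolding Md_def by (rule le_Max_bound[where f = "\<lambda>j. dist (xs ! j) (ys ! j)"])

lemma Bpl: "length xs = Suc k \<Longrightarrow> length ((B^^n) xs) = Suc k"
  by (rule bary_pow_length)

lemma B_ne:
  assumes "length xs = Suc k" "length ys = Suc k"
  shows "Md (B xs) (B ys) \<le> Md xs ys"
  unfolding Md_def[of "B xs"]
proof (rule Max_le_bound)
  show "0 < Suc k" by simp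
  fix i assume i: "i < Suc k"
  let ?a = "take i xs @ drop (Suc i) xs" and ?b = "take i ys @ drop (Suc i) ys"
  have "dist (\<mu> ?a) (\<mu> ?b) \<le> Max {dist (?a ! j) (?b ! j) |j. j < k}"
    using ne assms i unfolding nonexpansive_mean_def by auto
  also have "\<dots> \<le> Md xs ys"
  proof (rule Max_le_bound)
    show "0 < k" using k2 by simp
    fix j assume "j < k"
    then show "dist (?a ! j) (?b ! j) \<le> Md xs ys"
      unfolding Md_def using i
      by (auto simp: del_nth[OF assms(1) i] del_nth[OF assms(2) i] intro!: le_Max_bound)
  qed
  finally show "dist (B xs ! i) (B ys ! i) \<le> Md xs ys" using i by (simp add: bary_nth)
qed

lemma B_pow_ne:
  assumes "length xs = Suc k" "length ys = Suc k"
  shows "Md ((B^^n) xs) ((B^^n) ys) \<le> Md xs ys"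
proof (induction n)
  case 0 then show ?case by simp
next
  case (Suc n)
  then show ?case
    using B_ne[OF Bpl[OF assms(1)] Bpl[OF assms(2)], of n n] by simp
qed

lemma nu_ne:
  assumes "length xs = Suc k" "length ys = Suc k"
  shows "dist (nu xs) (nu ys) \<le> Md xs ys"
proof (rule LIMSEQ_le_const2)
  show "(\<lambda>n. dist ((B^^n) xs ! 0) ((B^^n) ys ! 0)) \<longlonglongrightarrow> dist (nu xs) (nu ys)"
    using nu_lim[OF assms(1)] nu_lim[OF assms(2)] by (intro tendsto_dist) auto
  show "\<exists>N. \<forall>n\<ge>N. dist ((B^^n) xs ! 0) ((B^^n) ys ! 0) \<le> Md xs ys"
  proof (intro exI allI impI)
    fix n
    have "dist ((B^^n) xs ! 0) ((B^^n) ys ! 0) \<le> Md ((B^^n) xs) ((B^^n) ys)"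
      by (rule Md_ge) simp
    then show "dist ((B^^n) xs ! 0) ((B^^n) ys ! 0) \<le> Md xs ys" using B_pow_ne[OF assms, of n] by linarith
  qed
qed

lemma nu_shift:
  assumes "length xs = Suc k"
  shows "nu (B xs) = nu xs"
proof -
  have "(\<lambda>n. (B^^n) (B xs) ! 0) \<longlonglongrightarrow> nu (B xs)"
    using nu_lim[OF bary_length] by simp
  moreover have "(\<lambda>n. (B^^n) (B xs) ! 0) = (\<lambda>n. (B^^Suc n) xs ! 0)"
    by (simp add: funpow_swap1)
  moreover have "(\<lambda>n. (B^^Suc n) xs ! 0) \<longlonglongrightarrow> nu xs"
    using nu_lim[OF assms] by (intro LIMSEQ_Suc) auto
  ultimately show ?thesis using LIMSEQ_unique by metis
qed


lemma nu_cc: "coord_contractive (Suc k) \<rho> nu"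
  unfolding coord_contractive_def
proof (intro allI impI)
  fix xs ys :: "'a list" and j
  assume lx: "length xs = Suc k" and ly: "length ys = Suc k" and j: "j < Suc k"
    and eq: "\<forall>i<Suc k. i \<noteq> j \<longrightarrow> xs ! i = ys ! i"
  have "Md (B xs) (B ys) \<le> \<rho> * dist (xs!j) (ys!j)"
    unfolding Md_def
  proof (rule Max_le_bound)
    show "0 < Suc k" by simp
    fix i assume i: "i < Suc k"
    let ?a = "take i xs @ drop (Suc i) xs" and ?b = "take i ys @ drop (Suc i) ys"
    have la: "length ?a = k" and lb: "length ?b = k" using lx ly i by auto
    show "dist (B xs ! i) (B ys ! i) \<le> \<rho> * dist (xs!j) (ys!j)"
    proof (cases "i = j")
      case True
      have "?a = ?b"
      proof (rule nth_equalityI)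
        show "length ?a = length ?b" using la lb by simp
        fix p assume "p < length ?a"
        then have p: "p < k" using la by simp
        show "?a!p = ?b!p" unfolding del_nth[OF lx i p] del_nth[OF ly i p] using eq True p i by auto
      qed
      then show ?thesis using i rho0 by (simp add: bary_nth)
    next
      case False
      define j' where "j' = (if j < i then j else j - 1)"
      have j'k: "j' < k" using False i j unfolding j'_def by auto
      have eq': "\<forall>p<k. p \<noteq> j' \<longrightarrow> ?a ! p = ?b ! p"
        using eq False i j unfolding j'_def by (auto simp: del_nth[OF lx i] del_nth[OF ly i])
      have "dist (\<mu> ?a) (\<mu> ?b) \<le> \<rho> * dist (?a!j') (?b!j')"
        using cc la lb eq' j'k unfolding coord_contractive_def by blast
      moreover have "?a!j' = xs!j" "?b!j' = ys!j"
        using False i j j'k unfolding j'_def by (auto simp: del_nth[OF lx i] del_nth[OF ly i])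
      ultimately show ?thesis using i by (simp add: bary_nth)
    qed
  qed
  then show "dist (nu xs) (nu ys) \<le> \<rho> * dist (xs!j) (ys!j)"
    using nu_ne[OF bary_length[of k \<mu> xs] bary_length[of k \<mu> ys]] nu_shift[OF lx] nu_shift[OF ly] by simp
qed

lemma B_rep: "B (replicate (Suc k) x) = replicate (Suc k) x"
proof -
  have "\<mu> (take i (replicate (Suc k) x) @ drop (Suc i) (replicate (Suc k) x)) = x" if "i < Suc k" for i
  proof -
    have "take i (replicate (Suc k) x) @ drop (Suc i) (replicate (Suc k) x) = replicate k x"
      using that by (simp only: take_replicate drop_replicate) (simp add: replicate_add[symmetric] min_def)
    then show ?thesis using mean unfolding is_mean_def by simp
  qed
  then show ?thesis unfolding barycentric_def
    by (intro nth_equalityI) (auto simp del: upt_Suc replicate.simps)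
qed

lemma nu_mean: "is_mean (Suc k) nu"
  unfolding is_mean_def
proof
  fix x
  have "(B^^n) (replicate (Suc k) x) = replicate (Suc k) x" for n
    by (induction n) (simp_all add: B_rep del: replicate.simps)
  then show "nu (replicate (Suc k) x) = x" unfolding nu_def by simp
qed

lemma nu_cont: "continuous_mean (Suc k) nu"
  unfolding continuous_mean_def
proof (intro allI impI)
  fix xs :: "'a list" and e :: real assume lx: "length xs = Suc k" and e: "0 < e"
  show "\<exists>d>0. \<forall>ys. length ys = Suc k \<longrightarrow> (\<forall>j<Suc k. dist (xs ! j) (ys ! j) < d) \<longrightarrow> dist (nu xs) (nu ys) < e"
  proof (intro exI conjI allI impI)
    fix ys :: "'a list" assume ly: "length ys = Suc k" and h: "\<forall>j<Suc k. dist (xs ! j) (ys ! j) < e"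
    have "Md xs ys < e" unfolding Md_def by (rule Max_less_bound) (use h in auto)
    then show "dist (nu xs) (nu ys) < e" using nu_ne[OF lx ly] by linarith
  qed (use e in auto)
qed

lemma nu_nonexp: "nonexpansive_mean (Suc k) nu"
  unfolding nonexpansive_mean_def using nu_ne unfolding Md_def by blast

end

theorem proposition3p13:
  fixes \<mu> :: "'a::complete_space list \<Rightarrow> 'a" and k :: nat and \<rho> :: real
  assumes "k \<ge> 2" and "0 < \<rho>" and "\<rho> < 1"
    and "is_mean k \<mu>" and "nonexpansive_mean k \<mu>" and "coord_contractive k \<rho> \<mu>"
  shows "power_convergent k \<mu> \<and>
    (\<exists>\<nu>. is_mean (Suc k) \<nu> \<and> continuous_mean (Suc k) \<nu> \<and> beta_extends k \<mu> \<nu> \<and>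
         (\<forall>\<nu>'. is_mean (Suc k) \<nu>' \<and> continuous_mean (Suc k) \<nu>' \<and> beta_extends k \<mu> \<nu>' \<longrightarrow>
               (\<forall>xs. length xs = Suc k \<longrightarrow> \<nu>' xs = \<nu> xs)) \<and>
         nonexpansive_mean (Suc k) \<nu> \<and> coord_contractive (Suc k) \<rho> \<nu>)"
proof -
  interpret bary \<mu> k \<rho> using assms by unfold_locales
  have ext: "beta_extends k \<mu> nu" unfolding beta_extends_def using nu_lim by blast
  have pc: "power_convergent k \<mu>" unfolding power_convergent_def using nu_lim by blast
  have uniq: "\<forall>\<nu>'. is_mean (Suc k) \<nu>' \<and> continuous_mean (Suc k) \<nu>' \<and> beta_extends k \<mu> \<nu>' \<longrightarrow>
               (\<forall>xs. length xs = Suc k \<longrightarrow> \<nu>' xs = nu xs)"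
  proof (intro allI impI)
    fix \<nu>' and xs :: "'a list" assume h: "is_mean (Suc k) \<nu>' \<and> continuous_mean (Suc k) \<nu>' \<and> beta_extends k \<mu> \<nu>'"
      and lx: "length xs = Suc k"
    have "(\<lambda>n. (B^^n) xs ! 0) \<longlonglongrightarrow> \<nu>' xs" using h lx unfolding beta_extends_def by blast
    then show "\<nu>' xs = nu xs" using nu_lim[OF lx, of 0] LIMSEQ_unique by blast
  qed
  show ?thesis using pc ext uniq nu_mean nu_cont nu_nonexp nu_cc by blast
qed

end
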